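(* Let $A$ and $B$ be self-adjoint operators on the same complex Hilbert space, with $B$ bounded and non-negative. Then the following are equivalent: (i) $0 \in \rho(A+tB)$ for every $t\in\mathbb{R}$; (ii) $0\in\rho(A)$ and $BA^{-1}B=0$. Moreover, in this case $0\in\rho(A+zB)$ for all $z \in \mathbb{C}$, and $$(A+zB)^{-1} = A^{-1} - zA^{-1}BA^{-1}.$$
   Context: $\rho(T)$ denotes the resolvent set of an operator $T$. $A$ may be unbounded; $A+zB$ is defined on the domain of $A$. *)

theory Defs
  imports "HOL-Analysis.Analysis"
begin

class complex_vector = real_vector +
  fixes scaleC :: "complex \<Rightarrow> 'a \<Rightarrow> 'a" (infixr \<open>*\<^sub>C\<close> 75)
  assumes scaleC_add_right: "a *\<^sub>C (x + y) = a *\<^sub>C x + a *\<^sub>C y"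
    and scaleC_add_left: "(a + b) *\<^sub>C x = a *\<^sub>C x + b *\<^sub>C x"
    and scaleC_scaleC: "a *\<^sub>C (b *\<^sub>C x) = (a * b) *\<^sub>C x"
    and scaleC_one: "1 *\<^sub>C x = x"
    and scaleR_scaleC: "scaleR r x = complex_of_real r *\<^sub>C x"

class complex_inner = complex_vector + real_normed_vector +
  fixes cinner :: "'a \<Rightarrow> 'a \<Rightarrow> complex"
  assumes cinner_commute: "cinner x y = cnj (cinner y x)"
    and cinner_add_left: "cinner (x + y) z = cinner x z + cinner y z"
    and cinner_scaleC_left: "cinner (r *\<^sub>C x) y = cnj r * cinner x y"
    and cinner_ge_zero: "Im (cinner x x) = 0 \<and> 0 \<le> Re (cinner x x)"
    and cinner_eq_zero_iff: "cinner x x = 0 \<longleftrightarrow> x = 0"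
    and norm_eq_sqrt_cinner: "norm x = sqrt (Re (cinner x x))"

class chilbert_space = complex_inner + complete_space

text \<open>A (possibly unbounded) linear operator is given by its domain D and its action T on D.\<close>
definition clinear_on :: "'a::complex_vector set \<Rightarrow> ('a \<Rightarrow> 'a) \<Rightarrow> bool" where
  "clinear_on D T \<longleftrightarrow> 0 \<in> D \<and>
     (\<forall>x\<in>D. \<forall>y\<in>D. \<forall>c. c *\<^sub>C x + y \<in> D \<and> T (c *\<^sub>C x + y) = c *\<^sub>C T x + T y)"

text \<open>Self-adjoint: densely defined, linear, and T = T* (including equality of domains):
  y \<in> dom(T*) with T* y = z iff \<langle>T x, y\<rangle> = \<langle>x, z\<rangle> for all x \<in> D.\<close>
definition self_adjoint_op :: "'a::chilbert_space set \<Rightarrow> ('a \<Rightarrow> 'a) \<Rightarrow> bool" where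
  "self_adjoint_op D T \<longleftrightarrow> clinear_on D T \<and> closure D = UNIV \<and>
     (\<forall>x\<in>D. \<forall>y\<in>D. cinner (T x) y = cinner x (T y)) \<and>
     (\<forall>y z. (\<forall>x\<in>D. cinner (T x) y = cinner x z) \<longrightarrow> y \<in> D \<and> T y = z)"

definition bounded_cop :: "('a::chilbert_space \<Rightarrow> 'a) \<Rightarrow> bool" where
  "bounded_cop T \<longleftrightarrow> clinear_on UNIV T \<and> (\<exists>C. \<forall>x. norm (T x) \<le> C * norm x)"

definition nonneg_op :: "('a::chilbert_space \<Rightarrow> 'a) \<Rightarrow> bool" where
  "nonneg_op T \<longleftrightarrow> (\<forall>x. 0 \<le> Re (cinner (T x) x))"

definition resolvent_set :: "'a::chilbert_space set \<Rightarrow> ('a \<Rightarrow> 'a) \<Rightarrow> complex set" where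
  "resolvent_set D T = {\<mu>. bij_betw (\<lambda>x. T x - \<mu> *\<^sub>C x) D UNIV \<and>
      (\<exists>C. \<forall>y. norm (inv_into D (\<lambda>x. T x - \<mu> *\<^sub>C x) y) \<le> C * norm y)}"

end

theory Submission
  imports Defs
begin

lemma scaleC_zero_left [simp]: "(0::complex) *\<^sub>C (x::'a::complex_vector) = 0"
proof -
  have "(0::complex) *\<^sub>C x = 0 *\<^sub>C x + 0 *\<^sub>C x" by (metis add_0 scaleC_add_left)
  thus ?thesis by simp
qed

lemma scaleC_zero_right [simp]: "a *\<^sub>C (0::'a::complex_vector) = 0"
proof -
  have "a *\<^sub>C (0::'a) = a *\<^sub>C 0 + a *\<^sub>C 0" by (metis add_0 scaleC_add_right)
  thus ?thesis by simp
qed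

lemma scaleC_minus_left: "(- a) *\<^sub>C (x::'a::complex_vector) = - (a *\<^sub>C x)"
proof -
  have "(- a) *\<^sub>C x + a *\<^sub>C x = 0" by (metis scaleC_add_left add.left_inverse scaleC_zero_left)
  thus ?thesis by (simp add: eq_neg_iff_add_eq_0)
qed

lemma scaleC_minus_right: "a *\<^sub>C (- x::'a::complex_vector) = - (a *\<^sub>C x)"
proof -
  have "a *\<^sub>C (- x) + a *\<^sub>C x = 0" by (metis scaleC_add_right add.left_inverse scaleC_zero_right)
  thus ?thesis by (simp add: eq_neg_iff_add_eq_0)
qed

lemma scaleC_diff_right: "a *\<^sub>C (x - y::'a::complex_vector) = a *\<^sub>C x - a *\<^sub>C y"
  by (metis diff_conv_add_uminus scaleC_add_right scaleC_minus_right)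

lemma scaleC_diff_left: "(a - b) *\<^sub>C (x::'a::complex_vector) = a *\<^sub>C x - b *\<^sub>C x"
  by (metis diff_conv_add_uminus scaleC_add_left scaleC_minus_left)

lemma scaleC_of_real: "complex_of_real r *\<^sub>C (x::'a::complex_vector) = r *\<^sub>R x"
  by (simp add: scaleR_scaleC)

lemma cinner_add_right: "cinner (x::'a::complex_inner) (y + z) = cinner x y + cinner x z"
proof -
  have "cinner x (y + z) = cnj (cinner (y + z) x)" by (rule cinner_commute)
  also have "\<dots> = cnj (cinner y x) + cnj (cinner z x)" by (simp add: cinner_add_left)
  also have "\<dots> = cinner x y + cinner x z" using cinner_commute[of x y, symmetric] cinner_commute[of x z, symmetric] by simp
  finally show ?thesis .
qed

lemma cinner_scaleC_right: "cinner (x::'a::complex_inner) (r *\<^sub>C y) = r * cinner x y"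
proof -
  have "cinner x (r *\<^sub>C y) = cnj (cinner (r *\<^sub>C y) x)" by (rule cinner_commute)
  also have "\<dots> = r * cnj (cinner y x)" by (simp add: cinner_scaleC_left)
  also have "\<dots> = r * cinner x y" using cinner_commute[of x y, symmetric] by simp
  finally show ?thesis .
qed

lemma cinner_zero_left [simp]: "cinner 0 (x::'a::complex_inner) = 0"
  using cinner_scaleC_left[of 0 x x] by simp

lemma cinner_zero_right [simp]: "cinner (x::'a::complex_inner) 0 = 0"
  using cinner_scaleC_right[of x 0 x] by simp

lemma cinner_minus_left: "cinner (- x::'a::complex_inner) y = - cinner x y"
proof -
  have "- x = (-1) *\<^sub>C x" by (simp add: scaleC_minus_left scaleC_one)
  then show ?thesis by (simp add: cinner_scaleC_left)
qed

lemma cinner_minus_right: "cinner (x::'a::complex_inner) (- y) = - cinner x y"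
proof -
  have "- y = (-1) *\<^sub>C y" by (simp add: scaleC_minus_left scaleC_one)
  then show ?thesis by (simp add: cinner_scaleC_right)
qed

lemma cinner_diff_left: "cinner (x - y::'a::complex_inner) z = cinner x z - cinner y z"
  using cinner_add_left[of x "- y" z] by (simp add: cinner_minus_left)

lemma cinner_diff_right: "cinner (x::'a::complex_inner) (y - z) = cinner x y - cinner x z"
  using cinner_add_right[of x y "- z"] by (simp add: cinner_minus_right)

lemma cinner_self: "cinner (x::'a::complex_inner) x = complex_of_real ((norm x)\<^sup>2)"
proof -
  have "Im (cinner x x) = 0" "0 \<le> Re (cinner x x)" using cinner_ge_zero by auto
  moreover have "(norm x)\<^sup>2 = Re (cinner x x)" using norm_eq_sqrt_cinner[of x] calculation by simp
  ultimately show ?thesis by (simp add: complex_eq_iff)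
qed

lemma clin_D: "clinear_on D T \<Longrightarrow> x \<in> D \<Longrightarrow> y \<in> D \<Longrightarrow> c *\<^sub>C x + y \<in> D \<and> T (c *\<^sub>C x + y) = c *\<^sub>C T x + T y"
  unfolding clinear_on_def by blast

lemma clin_0: assumes "clinear_on D T" shows "0 \<in> D" "T 0 = 0"
proof -
  show D0: "0 \<in> D" using assms unfolding clinear_on_def by blast
  have "T (1 *\<^sub>C 0 + 0) = 1 *\<^sub>C T 0 + T 0" using clin_D[OF assms D0 D0] by blast
  then show "T 0 = 0" by (simp add: scaleC_one)
qed

lemma clin_add: assumes "clinear_on D T" "x \<in> D" "y \<in> D" shows "x + y \<in> D" "T (x + y) = T x + T y"
  using clin_D[OF assms, of 1] by (auto simp: scaleC_one)

lemma clin_scale: assumes "clinear_on D T" "x \<in> D" shows "c *\<^sub>C x \<in> D" "T (c *\<^sub>C x) = c *\<^sub>C T x"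
  using clin_D[OF assms(1,2) clin_0(1)[OF assms(1)], of c] clin_0(2)[OF assms(1)] by auto

lemma clin_minus: assumes "clinear_on D T" "x \<in> D" shows "- x \<in> D" "T (- x) = - T x"
  using clin_scale[OF assms, of "-1"] by (auto simp: scaleC_minus_left scaleC_one)

lemma clin_diff: assumes "clinear_on D T" "x \<in> D" "y \<in> D" shows "x - y \<in> D" "T (x - y) = T x - T y"
  using clin_add[OF assms(1,2) clin_minus(1)[OF assms(1,3)]] clin_minus(2)[OF assms(1,3)] by auto

lemma clin_UNIV_I: assumes "\<And>c x y. T (c *\<^sub>C x + y) = c *\<^sub>C T x + T y" shows "clinear_on UNIV T"
  unfolding clinear_on_def using assms by blast

lemma clin_UNIV: "clinear_on UNIV T \<Longrightarrow> T (c *\<^sub>C x + y) = c *\<^sub>C T x + T y"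
  using clin_D by blast

lemma norm_scaleC: "norm (c *\<^sub>C (x::'a::complex_inner)) = cmod c * norm x"
proof -
  have "complex_of_real ((norm (c *\<^sub>C x))\<^sup>2) = cnj c * c * complex_of_real ((norm x)\<^sup>2)"
    by (simp only: cinner_self[symmetric] cinner_scaleC_left cinner_scaleC_right mult_ac)
  also have "\<dots> = complex_of_real ((cmod c * norm x)\<^sup>2)"
    using complex_norm_square[of c] by (simp add: power_mult_distrib mult.commute)
  finally have "(norm (c *\<^sub>C x))\<^sup>2 = (cmod c * norm x)\<^sup>2" using of_real_eq_iff by blast
  then show ?thesis by (simp add: power2_eq_iff_nonneg)
qed

lemma res0: "0 \<in> resolvent_set D T \<longleftrightarrow> bij_betw T D UNIV \<and> (\<exists>C. \<forall>y. norm (inv_into D T y) \<le> C * norm y)"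
  by (simp add: resolvent_set_def)

lemma bound_nonneg: assumes "\<forall>y. norm (f y) \<le> C * norm y" shows "\<exists>C\<ge>0. \<forall>y. norm (f y) \<le> C * norm (y::'b::real_normed_vector)"
proof (intro exI[of _ "max C 0"] conjI allI)
  fix y show "norm (f y) \<le> max C 0 * norm y"
    using assms[rule_format, of y] by (meson max.cobounded1 mult_right_mono norm_ge_zero order_trans)
qed simp

lemma inv_facts:
  assumes lin: "clinear_on D A" and bij: "bij_betw A D UNIV"
  shows "\<And>y. inv_into D A y \<in> D" "\<And>y. A (inv_into D A y) = y" "\<And>x. x \<in> D \<Longrightarrow> inv_into D A (A x) = x"
    "clinear_on UNIV (inv_into D A)"
proof -
  show K1: "\<And>y. inv_into D A y \<in> D" using bij by (metis bij_betw_def inv_into_into UNIV_I)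
  show K2: "\<And>y. A (inv_into D A y) = y" using bij by (metis bij_betw_def f_inv_into_f UNIV_I)
  show K3: "\<And>x. x \<in> D \<Longrightarrow> inv_into D A (A x) = x" using bij by (metis bij_betw_def inv_into_f_f)
  show "clinear_on UNIV (inv_into D A)"
  proof (rule clin_UNIV_I)
    fix c x y
    have m: "c *\<^sub>C inv_into D A x + inv_into D A y \<in> D" and
      e: "A (c *\<^sub>C inv_into D A x + inv_into D A y) = c *\<^sub>C x + y"
      using clin_D[OF lin K1 K1, of c x y] K2 by auto
    show "inv_into D A (c *\<^sub>C x + y) = c *\<^sub>C inv_into D A x + inv_into D A y"
      using K3[OF m] e by simp
  qed
qed

lemma cs_op:
  fixes T :: "'a::chilbert_space \<Rightarrow> 'a"
  assumes lin: "clinear_on UNIV T" and sym: "\<And>x y. cinner (T x) y = cinner x (T y)"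
    and nn: "\<And>x. 0 \<le> Re (cinner (T x) x)"
  shows "(cmod (cinner (T x) y))\<^sup>2 \<le> Re (cinner (T x) x) * Re (cinner (T y) y)"
proof -
  define w where "w = cinner (T y) x"
  define a where "a = Re (cinner (T x) x)"
  define c where "c = Re (cinner (T y) y)"
  define b where "b = (cmod w)\<^sup>2"
  have wxy: "cinner (T x) y = cnj w"
    unfolding w_def by (metis sym cinner_commute)
  have bw: "complex_of_real b = w * cnj w" unfolding b_def by (rule complex_norm_square)
  have key: "0 \<le> a - 2 * t * b + t\<^sup>2 * b * c" for t :: real
  proof -
    define s where "s = complex_of_real t * w"
    define v where "v = x - s *\<^sub>C y"
    have Tv: "T v = T x - s *\<^sub>C T y"
      unfolding v_def using clin_diff[OF lin, of x "s *\<^sub>C y"] clin_scale[OF lin, of y s] by simp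
    have "cinner (T v) v = cinner (T x) x - s * cinner (T x) y - cnj s * cinner (T y) x + cnj s * s * cinner (T y) y"
      unfolding Tv by (simp add: v_def cinner_diff_left cinner_diff_right cinner_scaleC_left cinner_scaleC_right algebra_simps)
    also have "\<dots> = cinner (T x) x - complex_of_real (2 * t * b) + complex_of_real (t\<^sup>2 * b) * cinner (T y) y"
      unfolding wxy s_def w_def[symmetric]
      by (simp add: bw algebra_simps power2_eq_square)
    finally have "Re (cinner (T v) v) = a - 2 * t * b + t\<^sup>2 * b * c"
      by (simp add: a_def c_def)
    then show ?thesis using nn[of v] by simp
  qed
  have a0: "0 \<le> a" and c0: "0 \<le> c" and b0: "0 \<le> b" using nn by (auto simp: a_def c_def b_def)
  have "b \<le> a * c"
  proof (cases "c > 0")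
    case True
    have "0 \<le> a - 2 * (1/c) * b + (1/c)\<^sup>2 * b * c" using key .
    also have "\<dots> = a - b / c" using True by (simp add: power2_eq_square field_simps)
    finally show ?thesis using True by (simp add: field_simps)
  next
    case False
    then have c: "c = 0" using c0 by simp
    show ?thesis
    proof (rule ccontr)
      assume "\<not> b \<le> a * c"
      then have bp: "b > 0" using c by simp
      have "0 \<le> a - 2 * ((a+1)/(2*b)) * b" using key[of "(a+1)/(2*b)"] c by simp
      also have "\<dots> = -1" using bp by (simp add: field_simps)
      finally show False by simp
    qed
  qed
  moreover have "(cmod (cinner (T x) y))\<^sup>2 = b" unfolding wxy b_def by simp
  ultimately show ?thesis by (simp add: a_def c_def)
qed

lemma norm_cs: "cmod (cinner x y) \<le> norm x * norm (y::'a::chilbert_space)"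
proof -
  have "(cmod (cinner (id x) y))\<^sup>2 \<le> Re (cinner (id x) x) * Re (cinner (id y) y)"
    by (rule cs_op) (auto simp: clinear_on_def cinner_self)
  then have "(cmod (cinner x y))\<^sup>2 \<le> (norm x * norm y)\<^sup>2"
    by (simp add: cinner_self power_mult_distrib)
  then show ?thesis by (rule power2_le_imp_le) simp
qed

lemma sqbound:
  fixes T :: "'a::chilbert_space \<Rightarrow> 'a"
  assumes lin: "clinear_on UNIV T" and sym: "\<And>x y. cinner (T x) y = cinner x (T y)"
    and nn: "\<And>x. 0 \<le> Re (cinner (T x) x)" and bnd: "\<And>x. norm (T x) \<le> C * norm x"
  shows "(norm (T x))\<^sup>2 \<le> C * Re (cinner (T x) x)"
proof (cases "T x = 0")
  case True then show ?thesis by simp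
next
  case False
  define u where "u = T x"
  have npos: "norm u > 0" using False u_def by simp
  have "(cmod (cinner (T x) u))\<^sup>2 \<le> Re (cinner (T x) x) * Re (cinner (T u) u)"
    by (rule cs_op[OF lin sym nn])
  moreover have "cmod (cinner (T x) u) = (norm u)\<^sup>2" unfolding u_def cinner_self norm_of_real by simp
  moreover have "Re (cinner (T u) u) \<le> C * (norm u)\<^sup>2"
  proof -
    have "Re (cinner (T u) u) \<le> cmod (cinner (T u) u)" by (rule complex_Re_le_cmod)
    also have "\<dots> \<le> norm (T u) * norm u" by (rule norm_cs)
    also have "\<dots> \<le> C * norm u * norm u" using bnd[of u] by (simp add: mult_right_mono)
    finally show ?thesis by (simp add: power2_eq_square mult.assoc)
  qed
  ultimately have "((norm u)\<^sup>2)\<^sup>2 \<le> Re (cinner (T x) x) * (C * (norm u)\<^sup>2)"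
    by (metis nn mult_left_mono order_trans)
  then have h: "(norm u)\<^sup>2 * (norm u)\<^sup>2 \<le> (C * Re (cinner (T x) x)) * (norm u)\<^sup>2"
    by (simp add: power2_eq_square mult_ac)
  have p: "0 < (norm u)\<^sup>2" using npos by simp
  have "(norm u)\<^sup>2 \<le> C * Re (cinner (T x) x)" using mult_right_le_imp_le[OF h p] .
  then show ?thesis by (simp add: u_def)
qed

lemma polar:
  fixes T :: "'a::chilbert_space \<Rightarrow> 'a"
  assumes lin: "clinear_on UNIV T" and z: "\<And>x. cinner (T x) x = 0"
  shows "T x = 0"
proof -
  have add: "T (a + b) = T a + T b" for a b using clin_add[OF lin] by simp
  have sc: "T (c *\<^sub>C a) = c *\<^sub>C T a" for a c using clin_scale[OF lin] by simp
  have e1: "cinner (T x) y + cinner (T y) x = 0" for y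
    using z[of "x + y"] z[of x] z[of y] by (simp add: add cinner_add_left cinner_add_right add.commute)
  have e2: "\<i> * cinner (T x) y - \<i> * cinner (T y) x = 0" for y
    using z[of "x + \<i> *\<^sub>C y"] z[of x] z[of y]
    by (simp add: add sc cinner_add_left cinner_add_right cinner_scaleC_left cinner_scaleC_right algebra_simps)
  have "cinner (T x) y = 0" for y
  proof -
    have "\<i> * cinner (T x) y + \<i> * cinner (T x) y = \<i> * (cinner (T x) y + cinner (T y) x) + (\<i> * cinner (T x) y - \<i> * cinner (T y) x)"
      by (simp add: algebra_simps)
    also have "\<dots> = 0" using e1[of y] e2[of y] by simp
    finally show ?thesis by simp
  qed
  from this[of "T x"] show ?thesis by (simp add: cinner_eq_zero_iff)
qed

lemma L1:
  fixes A B :: "'a::chilbert_space \<Rightarrow> 'a"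
  assumes linA: "clinear_on D A" and linB: "clinear_on UNIV B"
    and CB0: "0 \<le> CB" and bB: "\<And>x. norm (B x) \<le> CB * norm x"
    and bij: "bij_betw A D UNIV"
    and CK0: "0 \<le> CK" and bK: "\<And>y. norm (inv_into D A y) \<le> CK * norm y"
    and z0: "\<And>x. B (inv_into D A (B x)) = 0"
  shows "0 \<in> resolvent_set D (\<lambda>x. A x + z *\<^sub>C B x) \<and>
    (\<forall>y. inv_into D (\<lambda>x. A x + z *\<^sub>C B x) y = inv_into D A y - z *\<^sub>C inv_into D A (B (inv_into D A y)))"
proof -
  define K where "K = inv_into D A"
  define F where "F = (\<lambda>x. A x + z *\<^sub>C B x)"
  define R where "R = (\<lambda>y. K y - z *\<^sub>C K (B (K y)))"
  have K1: "\<And>y. K y \<in> D" and K2: "\<And>y. A (K y) = y" and K3: "\<And>x. x \<in> D \<Longrightarrow> K (A x) = x"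
    and linK: "clinear_on UNIV K"
    using inv_facts[OF linA bij] unfolding K_def by auto
  have Kadd: "K (a + b) = K a + K b" for a b using clin_add[OF linK] by simp
  have Ksc: "K (c *\<^sub>C a) = c *\<^sub>C K a" for a c using clin_scale[OF linK] by simp
  have Kdiff: "K (a - b) = K a - K b" for a b using clin_diff[OF linK] by simp
  have Badd: "B (a + b) = B a + B b" for a b using clin_add[OF linB] by simp
  have Bsc: "B (c *\<^sub>C a) = c *\<^sub>C B a" for a c using clin_scale[OF linB] by simp
  have Bdiff: "B (a - b) = B a - B b" for a b using clin_diff[OF linB] by simp
  have z0': "B (K (B x)) = 0" for x using z0 unfolding K_def .
  have RD: "R y \<in> D" for y
    unfolding R_def using clin_diff(1)[OF linA K1 clin_scale(1)[OF linA K1]] by blast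
  have FR: "F (R y) = y" for y
  proof -
    have "A (R y) = y - z *\<^sub>C B (K y)"
      unfolding R_def using clin_diff(2)[OF linA K1 clin_scale(1)[OF linA K1]] clin_scale(2)[OF linA K1] K2
      by simp
    moreover have "B (R y) = B (K y)" unfolding R_def by (simp add: Bdiff Bsc z0')
    ultimately show ?thesis unfolding F_def by simp
  qed
  have RF: "R (F x) = x" if "x \<in> D" for x
  proof -
    have kf: "K (F x) = x + z *\<^sub>C K (B x)" unfolding F_def by (simp add: Kadd Ksc K3[OF that])
    have "B (K (F x)) = B x" unfolding kf by (simp add: Badd Bsc z0')
    then show ?thesis unfolding R_def kf by simp
  qed
  have inj: "inj_on F D" by (metis RF inj_onI)
  have bijF: "bij_betw F D UNIV"
    unfolding bij_betw_def using inj RD FR by (metis UNIV_eq_I image_eqI)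
  have invF: "inv_into D F y = R y" for y
    using inv_into_f_f[OF inj RD[of y]] FR[of y] by simp
  have bnd: "norm (R y) \<le> (CK + cmod z * (CK * (CB * CK))) * norm y" for y
  proof -
    have "norm (K (B (K y))) \<le> CK * (CB * (CK * norm y))"
    proof -
      have "norm (K (B (K y))) \<le> CK * norm (B (K y))" using bK unfolding K_def .
      also have "\<dots> \<le> CK * (CB * norm (K y))" using bB CK0 by (simp add: mult_left_mono)
      also have "\<dots> \<le> CK * (CB * (CK * norm y))" using bK[of y] CK0 CB0 unfolding K_def
        by (simp add: mult_left_mono)
      finally show ?thesis .
    qed
    then have "cmod z * norm (K (B (K y))) \<le> cmod z * (CK * (CB * (CK * norm y)))"
      by (simp add: mult_left_mono)
    moreover have "norm (R y) \<le> norm (K y) + cmod z * norm (K (B (K y)))"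
      unfolding R_def using norm_triangle_ineq4[of "K y" "z *\<^sub>C K (B (K y))"] by (simp only: norm_scaleC)
    moreover have "norm (K y) \<le> CK * norm y" using bK unfolding K_def .
    ultimately show ?thesis by (simp add: algebra_simps)
  qed
  show ?thesis
    unfolding res0 F_def[symmetric] K_def[symmetric]
  proof (intro conjI exI allI)
    show "bij_betw F D UNIV" by (rule bijF)
    fix y
    show "norm (inv_into D F y) \<le> (CK + cmod z * (CK * (CB * CK))) * norm y" using bnd[of y] invF[of y] by simp
    show "inv_into D F y = K y - z *\<^sub>C K (B (K y))" using invF[of y] unfolding R_def .
  qed
qed

lemma clin_comb:
  assumes "clinear_on UNIV S" "clinear_on UNIV T"
  shows "clinear_on UNIV (\<lambda>x. a *\<^sub>C S x - b *\<^sub>C (T x :: 'a::complex_vector))"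
proof (rule clin_UNIV_I)
  fix c x y
  have s: "S (c *\<^sub>C x + y) = c *\<^sub>C S x + S y" and t: "T (c *\<^sub>C x + y) = c *\<^sub>C T x + T y"
    using clin_UNIV[OF assms(1)] clin_UNIV[OF assms(2)] by auto
  show "a *\<^sub>C S (c *\<^sub>C x + y) - b *\<^sub>C T (c *\<^sub>C x + y) =
        c *\<^sub>C (a *\<^sub>C S x - b *\<^sub>C T x) + (a *\<^sub>C S y - b *\<^sub>C T y)"
    unfolding s t by (simp add: scaleC_add_right scaleC_diff_right scaleC_scaleC mult.commute algebra_simps)
qed

lemma clin_comp:
  assumes "clinear_on UNIV S" "clinear_on UNIV T"
  shows "clinear_on UNIV (\<lambda>x. S (T x))"
  using assms by (intro clin_UNIV_I) (simp add: clin_UNIV)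

lemma cnj_of_real_scale: "cinner (complex_of_real r *\<^sub>C x) y = complex_of_real r * cinner x y"
  by (simp add: cinner_scaleC_left)

lemma L2:
  fixes A B :: "'a::chilbert_space \<Rightarrow> 'a"
  assumes sa: "self_adjoint_op D A" and saB: "self_adjoint_op UNIV B" and bB: "bounded_cop B"
    and nnB: "nonneg_op B"
    and H: "\<forall>t::real. 0 \<in> resolvent_set D (\<lambda>x. A x + complex_of_real t *\<^sub>C B x)"
  shows "B (inv_into D A (B x)) = 0"
proof -
  have linA: "clinear_on D A" and symA: "\<And>x y. x \<in> D \<Longrightarrow> y \<in> D \<Longrightarrow> cinner (A x) y = cinner x (A y)"
    using sa unfolding self_adjoint_op_def by (blast, blast)
  have linB: "clinear_on UNIV B" and symB: "\<And>x y. cinner (B x) y = cinner x (B y)"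
    using saB unfolding self_adjoint_op_def by (blast, blast)
  have nnB': "\<And>x. 0 \<le> Re (cinner (B x) x)" using nnB unfolding nonneg_op_def by blast
  obtain CB where CB0: "0 \<le> CB" and bndB: "\<And>x. norm (B x) \<le> CB * norm x"
    using bB bound_nonneg[of B] unfolding bounded_cop_def by blast
  have H0: "0 \<in> resolvent_set D A" using H[rule_format, of 0] by simp
  have bijA: "bij_betw A D UNIV" using H0 unfolding res0 by blast
  obtain CK where CK0: "0 \<le> CK" and bndK: "\<And>y. norm (inv_into D A y) \<le> CK * norm y"
    using H0 bound_nonneg[of "inv_into D A"] unfolding res0 by blast
  define K where "K = inv_into D A"
  have K1: "\<And>y. K y \<in> D" and K2: "\<And>y. A (K y) = y" and K3: "\<And>x. x \<in> D \<Longrightarrow> K (A x) = x"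
    and linK: "clinear_on UNIV K"
    using inv_facts[OF linA bijA] unfolding K_def by auto
  have bK: "\<And>y. norm (K y) \<le> CK * norm y" using bndK unfolding K_def .
  have Ksc: "K (c *\<^sub>C a) = c *\<^sub>C K a" for a c using clin_scale[OF linK] by simp
  have Bsc: "B (c *\<^sub>C a) = c *\<^sub>C B a" for a c using clin_scale[OF linB] by simp
  have K0: "K 0 = 0" using clin_0[OF linK] by simp
  have B0: "B 0 = 0" using clin_0[OF linB] by simp
  define q where "q = (\<lambda>x. cinner (K (B x)) (B x))"
  have qBKB: "cinner (B (K (B x))) x = q x" for x unfolding q_def by (rule symB)
  have symT: "cinner (B (K (B x))) y = cinner x (B (K (B y)))" for x y
  proof -
    have "cinner (B (K (B x))) y = cinner (K (B x)) (A (K (B y)))" by (simp add: symB K2)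
    also have "\<dots> = cinner (A (K (B x))) (K (B y))" using symA[OF K1 K1] by simp
    also have "\<dots> = cinner x (B (K (B y)))" by (simp add: K2 symB)
    finally show ?thesis .
  qed
  have qIm: "Im (q x) = 0" for x
  proof -
    have "q x = cnj (q x)" using symT[of x x] cinner_commute[of x "B (K (B x))"] qBKB[of x] by simp
    then have "Im (q x) = Im (cnj (q x))" by (rule arg_cong)
    then show ?thesis by simp
  qed
  have linT: "clinear_on UNIV (\<lambda>x. B (K (B x)))" using clin_comp[OF linB clin_comp[OF linK linB]] .
  have Kadd: "K (a + b) = K a + K b" for a b using clin_add[OF linK] by simp
  have Badd: "B (a + b) = B a + B b" for a b using clin_add[OF linB] by simp
  define bf where "bf = (\<lambda>x. Re (cinner (B x) x))"
  have bf0: "0 \<le> bf x" for x unfolding bf_def by (rule nnB')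
  have b1: "(norm (B x))\<^sup>2 \<le> CB * bf x" for x
    unfolding bf_def by (rule sqbound[OF linB symB nnB' bndB])
  have b2: "cmod (q x) \<le> CK * (norm (B x))\<^sup>2" for x
  proof -
    have "cmod (q x) \<le> norm (K (B x)) * norm (B x)" unfolding q_def by (rule norm_cs)
    also have "\<dots> \<le> CK * norm (B x) * norm (B x)" using bK[of "B x"] by (simp add: mult_right_mono)
    finally show ?thesis by (simp add: power2_eq_square mult.assoc)
  qed
  have b2': "\<bar>Re (q x)\<bar> \<le> CK * CB * bf x" for x
  proof -
    have "\<bar>Re (q x)\<bar> \<le> cmod (q x)" by (rule abs_Re_le_cmod)
    also have "\<dots> \<le> CK * (norm (B x))\<^sup>2" by (rule b2)
    also have "\<dots> \<le> CK * (CB * bf x)" using b1[of x] CK0 by (simp add: mult_left_mono)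
    finally show ?thesis by (simp add: mult.assoc)
  qed
  have b3: "q x = 0" if "bf x = 0" for x
  proof -
    have "(norm (B x))\<^sup>2 \<le> 0" using b1[of x] that by simp
    then have "B x = 0" by simp
    then show ?thesis unfolding q_def by (simp add: K0)
  qed
  have qscale: "q (complex_of_real r *\<^sub>C x) = complex_of_real (r\<^sup>2) * q x" for r x
    unfolding q_def by (simp add: Bsc Ksc cinner_scaleC_left cinner_scaleC_right power2_eq_square)
  have bfscale: "bf (complex_of_real r *\<^sub>C x) = r\<^sup>2 * bf x" for r x
    unfolding bf_def by (simp add: Bsc cinner_scaleC_left cinner_scaleC_right power2_eq_square)
  have qRe: "Re (q x0) = 0" for x0
  proof (rule ccontr)
    assume nz: "Re (q x0) \<noteq> 0"
    define sg where "sg = sgn (Re (q x0))"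
    have sg1: "\<bar>sg\<bar> = 1" unfolding sg_def using nz by (simp add: abs_sgn_eq)
    have sgsq: "sg * sg = 1" using sg1 by (simp add: abs_mult_self_eq[symmetric, of sg])
    define p where "p = (\<lambda>x. sg * Re (q x))"
    have p_le: "p x \<le> CK * CB * bf x" for x
    proof -
      have "p x \<le> \<bar>p x\<bar>" by simp
      also have "\<dots> = \<bar>Re (q x)\<bar>" unfolding p_def by (simp add: abs_mult sg1)
      finally show ?thesis using b2'[of x] by linarith
    qed
    have pscale: "p (complex_of_real r *\<^sub>C x) = r\<^sup>2 * p x" for r x
      unfolding p_def qscale by simp
    have p0: "p x0 > 0" unfolding p_def sg_def using nz by (cases "Re (q x0) > 0") auto
    have bfx0: "bf x0 > 0"
    proof -
      have "bf x0 \<noteq> 0" using b3[of x0] nz by auto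
      then show ?thesis using bf0[of x0] by simp
    qed
    have normalize: "bf (complex_of_real (1 / sqrt (bf x)) *\<^sub>C x) = 1 \<and>
        p (complex_of_real (1 / sqrt (bf x)) *\<^sub>C x) = p x / bf x" if "bf x > 0" for x
    proof -
      define r where "r = 1 / sqrt (bf x)"
      have r2: "r\<^sup>2 = 1 / bf x" using that by (simp add: r_def power_divide)
      show ?thesis unfolding r_def[symmetric] bfscale pscale r2 using that by simp
    qed
    define S where "S = p ` {x. bf x = 1}"
    have Sbdd: "bdd_above S" unfolding S_def
    proof (rule bdd_aboveI[of _ "CK * CB"])
      fix v assume "v \<in> p ` {x. bf x = 1}"
      then obtain x where "bf x = 1" "v = p x" by blast
      then show "v \<le> CK * CB" using p_le[of x] by simp
    qed
    have x1S: "p x0 / bf x0 \<in> S" unfolding S_def using normalize[OF bfx0] by (metis (mono_tags, lifting) image_eqI mem_Collect_eq)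
    have Sne: "S \<noteq> {}" using x1S by blast
    define lam where "lam = Sup S"
    have lam_pos: "lam > 0"
    proof -
      have "p x0 / bf x0 \<le> lam" unfolding lam_def by (rule cSup_upper[OF x1S Sbdd])
      moreover have "p x0 / bf x0 > 0" using p0 bfx0 by simp
      ultimately show ?thesis by simp
    qed
    have p_lam: "p x \<le> lam * bf x" for x
    proof (cases "bf x = 0")
      case True then show ?thesis using b3[of x] unfolding p_def by simp
    next
      case False
      then have bp: "bf x > 0" using bf0[of x] by simp
      have "p x / bf x \<in> S" unfolding S_def using normalize[OF bp] by (metis (mono_tags, lifting) image_eqI mem_Collect_eq)
      then have "p x / bf x \<le> lam" unfolding lam_def by (rule cSup_upper[OF _ Sbdd])
      then show ?thesis using bp by (simp add: divide_le_eq)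
    qed
    define P where "P = (\<lambda>x. complex_of_real lam *\<^sub>C B x - complex_of_real sg *\<^sub>C B (K (B x)))"
    have linP: "clinear_on UNIV P" unfolding P_def by (rule clin_comb[OF linB linT])
    have symP: "cinner (P x) y = cinner x (P y)" for x y
    proof -
      have st: "cinner (K (B x)) (B y) = cinner x (B (K (B y)))" using symT[of x y] by (simp only: symB)
      show ?thesis
        unfolding P_def by (simp add: cinner_diff_left cinner_diff_right cinner_scaleC_left cinner_scaleC_right symB st)
    qed
    have reP: "Re (cinner (P x) x) = lam * bf x - p x" for x
      unfolding P_def p_def bf_def by (simp add: cinner_diff_left cinner_scaleC_left qBKB)
    have nnP: "0 \<le> Re (cinner (P x) x)" for x using reP[of x] p_lam[of x] by simp
    define CP where "CP = lam * CB + CB * CK * CB"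
    have bndP: "norm (P x) \<le> CP * norm x" for x
    proof -
      have "norm (P x) \<le> norm (complex_of_real lam *\<^sub>C B x) + norm (complex_of_real sg *\<^sub>C B (K (B x)))"
        unfolding P_def by (rule norm_triangle_ineq4)
      also have "\<dots> = lam * norm (B x) + norm (B (K (B x)))"
        using lam_pos sg1 by (simp add: norm_scaleC)
      also have "\<dots> \<le> lam * (CB * norm x) + CB * (CK * (CB * norm x))"
      proof (rule add_mono)
        show "lam * norm (B x) \<le> lam * (CB * norm x)" using bndB[of x] lam_pos by simp
        have "norm (B (K (B x))) \<le> CB * norm (K (B x))" by (rule bndB)
        also have "\<dots> \<le> CB * (CK * norm (B x))" using bK[of "B x"] CB0 by (simp add: mult_left_mono)
        also have "\<dots> \<le> CB * (CK * (CB * norm x))" using bndB[of x] CB0 CK0 by (simp add: mult_left_mono)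
        finally show "norm (B (K (B x))) \<le> CB * (CK * (CB * norm x))" .
      qed
      also have "\<dots> = CP * norm x" unfolding CP_def by (simp add: algebra_simps)
      finally show ?thesis .
    qed
    have sqP: "(norm (P x))\<^sup>2 \<le> CP * (lam * bf x - p x)" for x
      using sqbound[OF linP symP nnP bndP, of x] reP[of x] by simp
    define t where "t = - sg / lam"
    define F where "F = (\<lambda>x. A x + complex_of_real t *\<^sub>C B x)"
    have Ht: "0 \<in> resolvent_set D F" using H unfolding F_def by blast
    have bijF: "bij_betw F D UNIV" using Ht unfolding res0 by blast
    obtain Ct where Ct0: "0 \<le> Ct" and bndF: "\<And>y. norm (inv_into D F y) \<le> Ct * norm y"
      using Ht bound_nonneg[of "inv_into D F"] unfolding res0 by blast
    define M where "M = Ct / lam * sqrt CB"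
    have M0: "0 \<le> M" unfolding M_def using Ct0 CB0 lam_pos by simp
    have keyM: "p x \<le> M * norm (P x)" if bf1: "bf x = 1" for x
    proof -
      define u where "u = B x"
      define y where "y = K u"
      have yD: "y \<in> D" unfolding y_def by (rule K1)
      have Fy: "F y = u + complex_of_real t *\<^sub>C B (K u)" unfolding F_def y_def by (simp add: K2)
      have "complex_of_real lam *\<^sub>C F y = P x"
      proof -
        have lt: "complex_of_real lam * complex_of_real t = - complex_of_real sg"
          unfolding t_def using lam_pos by (simp flip: of_real_mult of_real_minus)
        have "complex_of_real lam *\<^sub>C F y = complex_of_real lam *\<^sub>C u + (complex_of_real lam * complex_of_real t) *\<^sub>C B (K u)"
          unfolding Fy by (simp add: scaleC_add_right scaleC_scaleC)
        also have "\<dots> = P x" unfolding lt P_def u_def by (simp add: scaleC_minus_left)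
        finally show ?thesis .
      qed
      then have Fy2: "F y = complex_of_real (1 / lam) *\<^sub>C P x"
        using lam_pos by (metis (no_types, lifting) scaleC_scaleC scaleC_one of_real_1 of_real_divide of_real_eq_0_iff less_irrefl nonzero_divide_eq_eq times_divide_eq_left)
      have inj: "inj_on F D" using bijF unfolding bij_betw_def by blast
      have "y = inv_into D F (F y)" using inv_into_f_f[OF inj yD] by simp
      then have ny: "norm y \<le> Ct * (norm (P x) / lam)"
        using bndF[of "F y"] unfolding Fy2 using lam_pos by (simp add: norm_scaleC norm_divide)
      have nu: "norm u \<le> sqrt CB"
      proof -
        have "(norm u)\<^sup>2 \<le> CB" using b1[of x] bf1 unfolding u_def by simp
        then show ?thesis by (simp add: real_le_rsqrt)
      qed
      have "p x \<le> \<bar>Re (q x)\<bar>"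
      proof -
        have "sg * Re (q x) \<le> \<bar>sg * Re (q x)\<bar>" by (rule abs_ge_self)
        then show ?thesis unfolding p_def by (simp add: abs_mult sg1)
      qed
      also have "\<dots> \<le> cmod (q x)" by (rule abs_Re_le_cmod)
      also have "\<dots> \<le> norm y * norm u" unfolding q_def y_def u_def by (rule norm_cs)
      also have "\<dots> \<le> (Ct * (norm (P x) / lam)) * sqrt CB"
        using ny nu by (intro mult_mono) (use Ct0 lam_pos in auto)
      also have "\<dots> = M * norm (P x)" unfolding M_def by simp
      finally show ?thesis .
    qed
    define N where "N = M\<^sup>2 * CP"
    have CP0: "0 \<le> CP" unfolding CP_def using lam_pos CB0 CK0 by simp
    have N0: "0 \<le> N" unfolding N_def using CP0 by simp
    define eps where "eps = min (lam / 2) (lam\<^sup>2 / (8 * (N + 1)))"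
    have eps0: "eps > 0" unfolding eps_def using lam_pos N0 by simp
    have "lam - eps < Sup S" using eps0 unfolding lam_def by simp
    then obtain v where "v \<in> S" "lam - eps < v" using less_cSup_iff[OF Sne Sbdd] by blast
    then obtain x where bfx: "bf x = 1" and px: "lam - eps < p x" unfolding S_def by blast
    have eps_le1: "eps \<le> lam / 2" unfolding eps_def by (rule min.cobounded1)
    have eps_le2: "eps \<le> lam\<^sup>2 / (8 * (N + 1))" unfolding eps_def by (rule min.cobounded2)
    have px_half: "lam / 2 \<le> p x" using px eps_le1 by linarith
    have pxpos: "0 \<le> p x" using px_half lam_pos by linarith
    have gap: "lam - p x \<le> eps" using px by linarith
    have s1: "(p x)\<^sup>2 \<le> (M * norm (P x))\<^sup>2" by (rule power_mono[OF keyM[OF bfx] pxpos])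
    have s2: "(M * norm (P x))\<^sup>2 = M\<^sup>2 * (norm (P x))\<^sup>2" by (rule power_mult_distrib)
    have sq1: "(norm (P x))\<^sup>2 \<le> CP * (lam - p x)" using sqP[of x] bfx by simp
    have s3: "M\<^sup>2 * (norm (P x))\<^sup>2 \<le> M\<^sup>2 * (CP * (lam - p x))"
      by (rule mult_left_mono[OF sq1 zero_le_power2])
    have s4: "M\<^sup>2 * (CP * (lam - p x)) = N * (lam - p x)" unfolding N_def by (simp only: mult.assoc)
    have s5: "N * (lam - p x) \<le> N * eps" by (rule mult_left_mono[OF gap N0])
    have s6: "N * eps \<le> N * (lam\<^sup>2 / (8 * (N + 1)))" by (rule mult_left_mono[OF eps_le2 N0])
    have s7: "N * (lam\<^sup>2 / (8 * (N + 1))) \<le> lam\<^sup>2 / 8"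
    proof -
      have e: "N * (lam\<^sup>2 / (8 * (N + 1))) = (N / (N + 1)) * (lam\<^sup>2 / 8)" using N0 by (simp add: field_simps)
      have "N / (N + 1) \<le> 1" using N0 by simp
      then have "(N / (N + 1)) * (lam\<^sup>2 / 8) \<le> 1 * (lam\<^sup>2 / 8)" by (rule mult_right_mono) simp
      then show ?thesis unfolding e by simp
    qed
    have s8: "lam\<^sup>2 / 8 < (lam / 2)\<^sup>2" using lam_pos by (simp add: power_divide)
    have s9: "(lam / 2)\<^sup>2 \<le> (p x)\<^sup>2" by (rule power_mono[OF px_half]) (use lam_pos in simp)
    from s1 s2 s3 s4 s5 s6 s7 s8 s9 show False by linarith
  qed
  have "cinner (B (K (B y))) y = 0" for y using qBKB[of y] qRe[of y] qIm[of y] by (simp add: complex_eq_iff)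
  from polar[OF linT this] show ?thesis unfolding K_def .
qed

theorem proposition2p1:
  fixes D :: "'a::chilbert_space set" and A B :: "'a \<Rightarrow> 'a"
  assumes "self_adjoint_op D A"
    and "self_adjoint_op UNIV B" and "bounded_cop B" and "nonneg_op B"
  shows "((\<forall>t::real. 0 \<in> resolvent_set D (\<lambda>x. A x + complex_of_real t *\<^sub>C B x)) \<longleftrightarrow>
          (0 \<in> resolvent_set D A \<and> (\<forall>x. B (inv_into D A (B x)) = 0)))
     \<and> ((\<forall>t::real. 0 \<in> resolvent_set D (\<lambda>x. A x + complex_of_real t *\<^sub>C B x)) \<longrightarrow>
          (\<forall>z::complex. 0 \<in> resolvent_set D (\<lambda>x. A x + z *\<^sub>C B x) \<and>
             (\<forall>y. inv_into D (\<lambda>x. A x + z *\<^sub>C B x) y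
                  = inv_into D A y - z *\<^sub>C inv_into D A (B (inv_into D A y)))))"
proof -
  have linA: "clinear_on D A" using assms(1) unfolding self_adjoint_op_def by blast
  have linB: "clinear_on UNIV B" using assms(2) unfolding self_adjoint_op_def by blast
  obtain CB where CB0: "0 \<le> CB" and bndB: "\<And>x. norm (B x) \<le> CB * norm x"
    using assms(3) bound_nonneg[of B] unfolding bounded_cop_def by blast
  have bwd: "\<forall>z::complex. 0 \<in> resolvent_set D (\<lambda>x. A x + z *\<^sub>C B x) \<and>
             (\<forall>y. inv_into D (\<lambda>x. A x + z *\<^sub>C B x) y
                  = inv_into D A y - z *\<^sub>C inv_into D A (B (inv_into D A y)))"
    if r: "0 \<in> resolvent_set D A" and z0: "\<forall>x. B (inv_into D A (B x)) = 0"
  proof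
    fix z :: complex
    have bijA: "bij_betw A D UNIV" using r unfolding res0 by blast
    obtain CK where CK0: "0 \<le> CK" and bndK: "\<And>y. norm (inv_into D A y) \<le> CK * norm y"
      using r bound_nonneg[of "inv_into D A"] unfolding res0 by blast
    show "0 \<in> resolvent_set D (\<lambda>x. A x + z *\<^sub>C B x) \<and>
             (\<forall>y. inv_into D (\<lambda>x. A x + z *\<^sub>C B x) y
                  = inv_into D A y - z *\<^sub>C inv_into D A (B (inv_into D A y)))"
      by (rule L1[OF linA linB CB0 bndB bijA CK0 bndK]) (use z0 in blast)
  qed
  have fwd: "0 \<in> resolvent_set D A \<and> (\<forall>x. B (inv_into D A (B x)) = 0)"
    if H: "\<forall>t::real. 0 \<in> resolvent_set D (\<lambda>x. A x + complex_of_real t *\<^sub>C B x)"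
  proof
    show "0 \<in> resolvent_set D A" using H[rule_format, of 0] by simp
    show "\<forall>x. B (inv_into D A (B x)) = 0" using L2[OF assms H] by blast
  qed
  have i2: "\<forall>t::real. 0 \<in> resolvent_set D (\<lambda>x. A x + complex_of_real t *\<^sub>C B x)"
    if "0 \<in> resolvent_set D A \<and> (\<forall>x. B (inv_into D A (B x)) = 0)"
    using bwd that by blast
  show ?thesis using fwd i2 bwd by blast
qed

end
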